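(* Let $N_0\ge 1$ be an integer, $\lambda>0$, and for each $i\in\mathbb{N}$ let $\alpha_i>0$, $\rho_i>0$, and let $\mu_i(j),\sigma_i(j)\in\mathbb{R}$ be given for $j\ge N_0\vee i$. Assume: (i) for each $i\in\mathbb{N}$, the sequences $\{\mu_i(j)\}_{j\ge N_0\vee i}$ and $\{\sigma_i(j)\}_{j\ge N_0\vee i}$ are bounded; (ii) there exist constants $0<\underline{\beta}\le\overline{\beta}$ with $\underline{\beta}\le\beta_i(j)\le\overline{\beta}$ for all $j\ge N_0$ and $1\le i\le j$, where $\beta_i(j)$ is defined in the context. Then there exist real numbers $\{A(j),k_i(j)\}_{j\ge N_0,\,1\le i\le j}$ satisfying, for every $j\ge N_0$ and $1\le i\le j$, $$\frac{1}{A(j)}=\beta_\Sigma(j)+\lambda-\Big(\alpha_\Sigma(j)\sum_{i=1}^j\frac{\lambda A(j+1)e^{-\alpha_i(k_i(j+1)-k_i(j))}}{\alpha_i}\Big)\frac{1}{A(j)},$$ $$k_i(j)=\frac{(\beta_i(j)+\lambda)A(j)-1}{\alpha_i}-\frac{\lambda A(j+1)e^{-\alpha_i(k_i(j+1)-k_i(j))}}{\alpha_i},$$ together with the bounds $$\frac{1}{\overline{\beta}+\lambda}<A(j)\le\frac{1}{\underline{\beta}},\qquad A(j)e^{-\alpha_ik_i(j)}\le\frac{1}{\underline{\beta}},\qquad -\ln\Big(\frac{\overline{\beta}+\lambda}{\underline{\beta}}\Big)\le\alpha_ik_i(j)\le\frac{\overline{\beta}+\lambda}{\underline{\beta}}-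1.$$
   Context: For $j\ge N_0$ and $1\le i\le j$ define $\alpha_\Sigma(j):=\big(\sum_{i=1}^j 1/\alpha_i\big)^{-1}$, $\beta_i(j):=\rho_i+\alpha_i\mu_i(j)-\tfrac12\alpha_i^2\sigma_i^2(j)$, $\beta_\Sigma(j):=\alpha_\Sigma(j)\sum_{i=1}^j \beta_i(j)/\alpha_i$. (Assumption (ii) implies $\underline{\beta}\le\beta_\Sigma(j)\le\overline{\beta}$.) *)

theory Defs
  imports Complex_Main
begin

text \<open>Indices i range over the positive integers; alpha, rho :: nat => real,
 mu, sigma :: nat => nat => real with mu i j = mu_i(j).\<close>

definition alpha_Sigma :: "(nat \<Rightarrow> real) \<Rightarrow> nat \<Rightarrow> real" where
  "alpha_Sigma alpha j = inverse (\<Sum>i=1..j. 1 / alpha i)"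

definition beta_i :: "(nat \<Rightarrow> real) \<Rightarrow> (nat \<Rightarrow> real) \<Rightarrow> (nat \<Rightarrow> nat \<Rightarrow> real)
    \<Rightarrow> (nat \<Rightarrow> nat \<Rightarrow> real) \<Rightarrow> nat \<Rightarrow> nat \<Rightarrow> real" where
  "beta_i rho alpha mu sigma i j =
     rho i + alpha i * mu i j - (1/2) * (alpha i)^2 * (sigma i j)^2"

definition beta_Sigma :: "(nat \<Rightarrow> real) \<Rightarrow> (nat \<Rightarrow> real) \<Rightarrow> (nat \<Rightarrow> nat \<Rightarrow> real)
    \<Rightarrow> (nat \<Rightarrow> nat \<Rightarrow> real) \<Rightarrow> nat \<Rightarrow> real" where
  "beta_Sigma rho alpha mu sigma j =
     alpha_Sigma alpha j * (\<Sum>i=1..j. beta_i rho alpha mu sigma i j / alpha i)"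

end

theory Submission imports Defs "HOL-Analysis.Analysis" begin

definition gy :: "real \<Rightarrow> real \<Rightarrow> real" where
  "gy c t = (THE y. y + c * exp y = t)"

lemma h_mono: "(c::real) \<ge> 0 \<Longrightarrow> y < z \<Longrightarrow> y + c * exp y < z + c * exp z"
  by (simp add: add_less_le_mono mult_left_mono)

lemma h_ex: assumes "(c::real) > 0" shows "\<exists>y. y + c * exp y = t"
proof -
  let ?a = "min t 0 - c"
  have "?a + c * exp ?a \<le> t"
  proof -
    have "exp ?a \<le> 1" using assms by simp
    then have "c * exp ?a \<le> c" using assms by (simp add: mult_left_le)
    then show ?thesis by linarith
  qed
  moreover have "t \<le> t + c * exp t" using assms by simp
  moreover have "?a \<le> t" using assms by linarith
  moreover have "continuous_on {?a..t} (\<lambda>y. y + c * exp y)"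
    by (intro continuous_intros)
  ultimately show ?thesis using IVT'[of "\<lambda>y. y + c * exp y" ?a t t] by blast
qed

lemma h_ex1: assumes "(c::real) > 0" shows "\<exists>!y. y + c * exp y = t"
proof -
  obtain y where y: "y + c * exp y = t" using h_ex[OF assms] by blast
  moreover have "z = y" if "z + c * exp z = t" for z
    using h_mono[of c y z] h_mono[of c z y] assms y that by (cases "z < y"; cases "y < z") auto
  ultimately show ?thesis by blast
qed

lemma gy: "(c::real) > 0 \<Longrightarrow> gy c t + c * exp (gy c t) = t"
  unfolding gy_def by (rule theI', rule h_ex1)

lemma gy_unique: "(c::real) > 0 \<Longrightarrow> y + c * exp y = t \<Longrightarrow> gy c t = y"
  unfolding gy_def by (rule the1_equality, rule h_ex1) auto

lemma gy_mono: assumes "(c::real) > 0" "s \<le> t" shows "gy c s \<le> gy c t"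
proof (rule ccontr)
  assume "\<not> ?thesis"
  then have "gy c t + c * exp (gy c t) < gy c s + c * exp (gy c s)"
    using h_mono[of c "gy c t" "gy c s"] assms by simp
  then show False using gy[OF assms(1), of s] gy[OF assms(1), of t] assms by linarith
qed

lemma gy_lip1: assumes "(c::real) > 0" "s \<le> t" shows "gy c t - gy c s \<le> t - s"
proof -
  have "exp (gy c s) \<le> exp (gy c t)" using gy_mono[OF assms] by simp
  then have "c * exp (gy c s) \<le> c * exp (gy c t)" using assms by simp
  then show ?thesis using gy[OF assms(1), of s] gy[OF assms(1), of t] by linarith
qed

lemma gy_cont: assumes "(c::real) > 0" shows "continuous_on UNIV (gy c)"
proof (rule lipschitz_on_continuous_on)
  show "1-lipschitz_on UNIV (gy c)"
  proof (rule lipschitz_onI)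
    fix x y :: real
    show "dist (gy c x) (gy c y) \<le> 1 * dist x y"
    proof (cases "x \<le> y")
      case True then show ?thesis using gy_lip1[OF assms True] gy_mono[OF assms True]
        by (simp add: dist_real_def)
    next
      case False then have yx: "y \<le> x" by simp
      show ?thesis using gy_lip1[OF assms yx] gy_mono[OF assms yx]
        by (simp add: dist_real_def)
    qed
  qed simp
qed


lemma step_ex:
  fixes alpha b c :: "nat \<Rightarrow> real" and bl lam :: real
  assumes j: "j \<ge> 1" and ap: "\<And>i. i \<in> {1..j} \<Longrightarrow> alpha i > 0"
    and bp: "\<And>i. i \<in> {1..j} \<Longrightarrow> bl \<le> b i" and bl: "0 < bl" and lam: "lam > 0"
    and cp: "\<And>i. i \<in> {1..j} \<Longrightarrow> 0 < c i \<and> c i \<le> lam / bl"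
  shows "\<exists>A y. (\<forall>i\<in>{1..j}. y i + c i * exp (y i) = (b i + lam) * A - 1)
            \<and> (\<Sum>i=1..j. y i / alpha i) = 0"
proof -
  define F where "F A = (\<Sum>i=1..j. gy (c i) ((b i + lam) * A - 1) / alpha i)" for A
  have cont: "continuous_on {0..1/bl} F"
    unfolding F_def
  proof (intro continuous_on_sum continuous_on_divide continuous_on_const)
    fix i assume i: "i \<in> {1..j}"
    show "continuous_on {0..1/bl} (\<lambda>A. gy (c i) ((b i + lam) * A - 1))"
      by (rule continuous_on_compose2[OF gy_cont[of "c i"]]) (use cp[OF i] in \<open>auto intro!: continuous_intros\<close>)
    show "\<forall>x\<in>{0..1/bl}. alpha i \<noteq> 0" using ap[OF i] by simp
  qed
  have "F 0 \<le> 0"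
    unfolding F_def
  proof (rule sum_nonpos)
    fix i assume i: "i \<in> {1..j}"
    have "gy (c i) (-1) + c i * exp (gy (c i) (-1)) = -1" using gy cp[OF i] by blast
    moreover have "c i * exp (gy (c i) (-1)) > 0" using cp[OF i] by simp
    ultimately have "gy (c i) (-1) \<le> 0" by linarith
    then show "gy (c i) ((b i + lam) * 0 - 1) / alpha i \<le> 0"
      using ap[OF i] by (simp add: divide_nonpos_pos)
  qed
  moreover have "0 \<le> F (1/bl)"
    unfolding F_def
  proof (rule sum_nonneg)
    fix i assume i: "i \<in> {1..j}"
    have g0: "gy (c i) (c i) = 0" using gy_unique[of "c i" 0 "c i"] cp[OF i] by simp
    have "c i \<le> lam / bl" using cp[OF i] by simp
    also have "lam / bl \<le> (b i + lam) * (1/bl) - 1"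
      using bp[OF i] bl by (simp add: field_simps)
    finally have "gy (c i) (c i) \<le> gy (c i) ((b i + lam) * (1/bl) - 1)"
      using gy_mono cp[OF i] by blast
    then show "0 \<le> gy (c i) ((b i + lam) * (1/bl) - 1) / alpha i"
      using g0 ap[OF i] by simp
  qed
  moreover have "0 \<le> 1/bl" using bl by simp
  ultimately obtain A where "F A = 0" using IVT'[of F 0 0 "1/bl"] cont by blast
  then show ?thesis
    by (intro exI[of _ A] exI[of _ "\<lambda>i. gy (c i) ((b i + lam) * A - 1)"])
       (use gy cp in \<open>auto simp: F_def\<close>)
qed

lemma step_bounds:
  fixes alpha b c y :: "nat \<Rightarrow> real" and bl bh lam A :: real
  assumes j: "j \<ge> 1" and apA: "\<forall>i\<in>{1..j}. alpha i > 0"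
    and bpA: "\<forall>i\<in>{1..j}. bl \<le> b i \<and> b i \<le> bh" and bl: "0 < bl" and lam: "lam > 0"
    and cpA: "\<forall>i\<in>{1..j}. 0 < c i \<and> c i \<le> lam / bl"
    and E1A: "\<forall>i\<in>{1..j}. y i + c i * exp (y i) = (b i + lam) * A - 1"
    and E2: "(\<Sum>i=1..j. y i / alpha i) = 0"
  shows "1/(bh+lam) < A" "A \<le> 1/bl"
    "\<And>i. i \<in> {1..j} \<Longrightarrow> A * exp (- y i) \<le> 1/bl"
    "\<And>i. i \<in> {1..j} \<Longrightarrow> - ln ((bh+lam)/bl) \<le> y i"
    "\<And>i. i \<in> {1..j} \<Longrightarrow> y i \<le> (bh+lam)/bl - 1"
proof -
  have ap: "\<And>i. i \<in> {1..j} \<Longrightarrow> alpha i > 0" using apA by blast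
  have bp: "\<And>i. i \<in> {1..j} \<Longrightarrow> bl \<le> b i \<and> b i \<le> bh" using bpA by blast
  have cp: "\<And>i. i \<in> {1..j} \<Longrightarrow> 0 < c i \<and> c i \<le> lam / bl" using cpA by blast
  have E1: "\<And>i. i \<in> {1..j} \<Longrightarrow> y i + c i * exp (y i) = (b i + lam) * A - 1" using E1A by blast
  have ne: "{1..j} \<noteq> {}" using j by simp
  obtain i0 where i0: "i0 \<in> {1..j}" "y i0 \<le> 0"
  proof (rule ccontr)
    assume "\<not> thesis"
    then have "\<forall>i\<in>{1..j}. y i / alpha i > 0" using that ap by (metis divide_pos_pos not_le)
    then have "(\<Sum>i=1..j. y i / alpha i) > 0" using ne by (intro sum_pos) auto
    then show False using E2 by simp
  qed
  obtain i1 where i1: "i1 \<in> {1..j}" "y i1 \<ge> 0"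
  proof (rule ccontr)
    assume "\<not> thesis"
    then have "\<forall>i\<in>{1..j}. - (y i / alpha i) > 0" using that ap by (metis divide_neg_pos neg_0_less_iff_less not_le)
    then have "(\<Sum>i=1..j. - (y i / alpha i)) > 0" using ne by (intro sum_pos) auto
    then show False using E2 by (simp add: sum_negf)
  qed
  show Aup: "A \<le> 1/bl"
  proof -
    have "exp (y i0) \<le> 1" using i0 by simp
    then have "c i0 * exp (y i0) \<le> c i0" using cp[OF i0(1)] by (simp add: mult_left_le)
    then have "(b i0 + lam) * A \<le> 1 + lam / bl" using E1[OF i0(1)] cp[OF i0(1)] i0 by linarith
    also have "... = (bl + lam) * (1/bl)" using bl by (simp add: field_simps)
    finally have *: "(b i0 + lam) * A \<le> (bl + lam) * (1/bl)" .
    show ?thesis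
    proof (cases "A \<le> 0")
      case True then show ?thesis using bl by (smt (verit) divide_pos_pos)
    next
      case False
      then have "(bl + lam) * A \<le> (b i0 + lam) * A" using bp[OF i0(1)] by (simp add: mult_right_mono)
      then have "(bl + lam) * A \<le> (bl + lam) * (1/bl)" using * by linarith
      then show ?thesis using mult_le_cancel_left_pos[of "bl+lam"] bl lam by (metis add_pos_pos)
    qed
  qed
  have Apos1: "(b i1 + lam) * A > 1"
  proof -
    have "c i1 * exp (y i1) > 0" using cp[OF i1(1)] by simp
    then show ?thesis using E1[OF i1(1)] i1 by linarith
  qed
  have Apos: "A > 0"
  proof (rule ccontr)
    assume "\<not> A > 0"
    then have "(b i1 + lam) * A \<le> 0" using bp[OF i1(1)] bl lam
      by (intro mult_nonneg_nonpos) auto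
    then show False using Apos1 by simp
  qed
  show Alo: "1/(bh+lam) < A"
  proof -
    have "(b i1 + lam) * A \<le> (bh + lam) * A" using bp[OF i1(1)] Apos by (simp add: mult_right_mono)
    then have "1 < (bh + lam) * A" using Apos1 by linarith
    moreover have "bh + lam > 0" using bp[OF i1(1)] bl lam by linarith
    ultimately show ?thesis by (simp add: field_simps)
  qed
  show xb: "A * exp (- y i) \<le> 1/bl" if i: "i \<in> {1..j}" for i
  proof -
    have "(b i + lam) * A = 1 + y i + c i * exp (y i)" using E1[OF i] by linarith
    then have "(b i + lam) * A * exp (- y i) = (1 + y i + c i * exp (y i)) * exp (- y i)" by simp
    also have "... = (1 + y i) * exp (- y i) + c i * (exp (y i) * exp (- y i))"
      by (simp add: algebra_simps)
    also have "exp (y i) * exp (- y i) = 1" by (simp add: exp_minus_inverse)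
    finally have "(b i + lam) * A * exp (- y i) = (1 + y i) * exp (- y i) + c i" by simp
    also have "(1 + y i) * exp (- y i) \<le> 1"
    proof -
      have "(1 + y i) * exp (- y i) \<le> exp (y i) * exp (- y i)"
        by (rule mult_right_mono) auto
      then show ?thesis by (simp add: exp_minus_inverse)
    qed
    then have "(1 + y i) * exp (- y i) + c i \<le> 1 + lam / bl" using cp[OF i] by linarith
    finally have *: "(b i + lam) * (A * exp (- y i)) \<le> (bl + lam) * (1/bl)"
      using bl by (simp add: field_simps)
    have "(bl + lam) * (A * exp (- y i)) \<le> (b i + lam) * (A * exp (- y i))"
      using bp[OF i] Apos by (intro mult_right_mono) auto
    then have "(bl + lam) * (A * exp (- y i)) \<le> (bl + lam) * (1/bl)" using * by linarith
    then show ?thesis using mult_le_cancel_left_pos[of "bl+lam"] bl lam by (metis add_pos_pos)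
  qed
  show "y i \<le> (bh+lam)/bl - 1" if i: "i \<in> {1..j}" for i
  proof -
    have "y i \<le> (b i + lam) * A - 1" using E1[OF i] cp[OF i]
      by (smt (verit) exp_gt_zero mult_pos_pos)
    also have "(b i + lam) * A \<le> (bh + lam) * (1/bl)"
      using bp[OF i] Apos Aup bl lam by (intro mult_mono) auto
    finally show ?thesis by simp
  qed
  show "- ln ((bh+lam)/bl) \<le> y i" if i: "i \<in> {1..j}" for i
  proof -
    have hp: "bh + lam > 0" using bp[OF i] bl lam by linarith
    have "A * exp (- y i) \<le> 1/bl" using xb[OF i] .
    then have "exp (- y i) \<le> 1/(bl * A)" using Apos bl by (simp add: field_simps)
    also have "1/(bl * A) < (bh+lam)/bl"
      using Alo Apos bl hp by (simp add: field_simps)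
    finally have "exp (- y i) < (bh+lam)/bl" .
    then have "- y i < ln ((bh+lam)/bl)" using hp bl
      by (metis exp_less_cancel_iff exp_ln divide_pos_pos)
    then show ?thesis by simp
  qed
qed


primrec backrec :: "(nat \<Rightarrow> (nat \<Rightarrow> real) \<Rightarrow> (nat \<Rightarrow> real)) \<Rightarrow> (nat \<Rightarrow> real) \<Rightarrow> nat \<Rightarrow> nat \<Rightarrow> (nat \<Rightarrow> real)" where
  "backrec f z T 0 = z"
| "backrec f z T (Suc n) = f (T - Suc n) (backrec f z T n)"

lemma lim_eq0: "(f \<longlongrightarrow> (a::real)) sequentially \<Longrightarrow> eventually (\<lambda>n. f n = 0) sequentially \<Longrightarrow> a = 0"
  using LIMSEQ_unique tendsto_eventually by blast

lemma lim_le: "(f \<longlongrightarrow> (a::real)) sequentially \<Longrightarrow> eventually (\<lambda>n. f n \<le> c) sequentially \<Longrightarrow> a \<le> c"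
  using tendsto_upperbound by (metis trivial_limit_sequentially)

lemma lim_ge: "(f \<longlongrightarrow> (a::real)) sequentially \<Longrightarrow> eventually (\<lambda>n. c \<le> f n) sequentially \<Longrightarrow> c \<le> a"
  using tendsto_lowerbound by (metis trivial_limit_sequentially)


lemma compact_box1: "compact (PiE UNIV (\<lambda>_::nat. {-M..(M::real)}))"
proof -
  have "compactin (product_topology (\<lambda>_::nat. (euclidean :: real topology)) UNIV) (PiE UNIV (\<lambda>_::nat. {-M..M}))"
    by (subst compactin_PiE) auto
  then show ?thesis by (simp only: euclidean_product_topology compactin_euclidean_iff)
qed


lemma compact_box: "compact (PiE UNIV (\<lambda>_::nat. PiE UNIV (\<lambda>_::nat. {-M..(M::real)})))"
proof -
  have "compactin (product_topology (\<lambda>_::nat. (euclidean :: (nat \<Rightarrow> real) topology)) UNIV) (PiE UNIV (\<lambda>_::nat. PiE UNIV (\<lambda>_::nat. {-M..M})))"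
    by (subst compactin_PiE) (simp only: compactin_euclidean_iff compact_box1 simp_thms ball_simps)
  then show ?thesis by (simp only: euclidean_product_topology compactin_euclidean_iff)
qed

lemma coord_tendsto:
  fixes X :: "nat \<Rightarrow> nat \<Rightarrow> nat \<Rightarrow> real"
  assumes "X \<longlonglongrightarrow> W"
  shows "(\<lambda>n. X n j i) \<longlonglongrightarrow> W j i"
proof -
  have "continuous_on UNIV (\<lambda>f::nat \<Rightarrow> nat \<Rightarrow> real. f j)"
    by (rule continuous_on_product_coordinates)
  then have "continuous_on UNIV (\<lambda>f::nat \<Rightarrow> nat \<Rightarrow> real. f j i)"
    by (rule continuous_on_product_then_coordinatewise)
  then have "isCont (\<lambda>f::nat \<Rightarrow> nat \<Rightarrow> real. f j i) W"
    using continuous_on_eq_continuous_at open_UNIV by blast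
  from isCont_tendsto_compose[OF this assms] show ?thesis .
qed


lemma eq1_alg:
  fixes alpha b y e :: "nat \<Rightarrow> real" and A lam :: real
  assumes j: "j \<ge> 1" and ap: "\<And>i. i \<in> {1..j} \<Longrightarrow> alpha i > 0" and A: "A \<noteq> 0"
    and E: "\<And>i. i \<in> {1..j} \<Longrightarrow> e i = (b i + lam) * A - 1 - y i"
    and E2: "(\<Sum>i=1..j. y i / alpha i) = 0"
  shows "1 / A = inverse (\<Sum>i=1..j. 1 / alpha i) * (\<Sum>i=1..j. b i / alpha i) + lam
          - (inverse (\<Sum>i=1..j. 1 / alpha i) * (\<Sum>l=1..j. e l / alpha l)) * (1 / A)"
proof -
  define S1 where "S1 = (\<Sum>i=1..j. 1 / alpha i)"
  define SB where "SB = (\<Sum>i=1..j. b i / alpha i)"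
  have S1: "S1 > 0" unfolding S1_def using j ap by (intro sum_pos) auto
  have "(\<Sum>l=1..j. e l / alpha l) = (\<Sum>l=1..j. A * (b l / alpha l) + (lam * A - 1) * (1 / alpha l) - y l / alpha l)"
  proof (rule sum.cong)
    fix l assume l: "l \<in> {1..j}"
    have "alpha l \<noteq> 0" using ap[OF l] by simp
    then show "e l / alpha l = A * (b l / alpha l) + (lam * A - 1) * (1 / alpha l) - y l / alpha l"
      unfolding E[OF l] by (simp add: field_simps)
  qed simp
  also have "... = A * SB + (lam * A - 1) * S1"
    using E2 by (simp add: sum.distrib sum_subtractf sum_distrib_left SB_def S1_def)
  finally have SE: "(\<Sum>l=1..j. e l / alpha l) = A * SB + (lam * A - 1) * S1" .
  show ?thesis
    unfolding S1_def[symmetric] SB_def[symmetric] SE using S1 A by (simp add: field_simps)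
qed

theorem theorem3p2:
  fixes N0 :: nat and lam :: real
    and alpha rho :: "nat \<Rightarrow> real"
    and mu sigma :: "nat \<Rightarrow> nat \<Rightarrow> real"
    and beta_lo beta_hi :: real
  assumes N0: "N0 \<ge> 1"
    and lam: "lam > 0"
    and alpha_pos: "\<And>i. i \<ge> 1 \<Longrightarrow> alpha i > 0"
    and rho_pos: "\<And>i. i \<ge> 1 \<Longrightarrow> rho i > 0"
    and mu_bdd: "\<And>i. i \<ge> 1 \<Longrightarrow> \<exists>M. \<forall>j \<ge> max N0 i. \<bar>mu i j\<bar> \<le> M"
    and sigma_bdd: "\<And>i. i \<ge> 1 \<Longrightarrow> \<exists>M. \<forall>j \<ge> max N0 i. \<bar>sigma i j\<bar> \<le> M"
    and beta_lo_pos: "0 < beta_lo" and beta_lo_hi: "beta_lo \<le> beta_hi"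
    and beta_bounds: "\<And>i j. j \<ge> N0 \<Longrightarrow> 1 \<le> i \<Longrightarrow> i \<le> j \<Longrightarrow>
        beta_lo \<le> beta_i rho alpha mu sigma i j \<and> beta_i rho alpha mu sigma i j \<le> beta_hi"
  shows "\<exists>(A :: nat \<Rightarrow> real) (k :: nat \<Rightarrow> nat \<Rightarrow> real).
     \<forall>j \<ge> N0. \<forall>i. 1 \<le> i \<and> i \<le> j \<longrightarrow>
       1 / A j = beta_Sigma rho alpha mu sigma j + lam
          - (alpha_Sigma alpha j * (\<Sum>l=1..j. lam * A (j+1) * exp (- alpha l * (k l (j+1) - k l j)) / alpha l))
            * (1 / A j)
     \<and> k i j = ((beta_i rho alpha mu sigma i j + lam) * A j - 1) / alpha i
          - lam * A (j+1) * exp (- alpha i * (k i (j+1) - k i j)) / alpha i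
     \<and> 1 / (beta_hi + lam) < A j \<and> A j \<le> 1 / beta_lo
     \<and> A j * exp (- alpha i * k i j) \<le> 1 / beta_lo
     \<and> - ln ((beta_hi + lam) / beta_lo) \<le> alpha i * k i j
     \<and> alpha i * k i j \<le> (beta_hi + lam) / beta_lo - 1"
proof -
  define bb where "bb j i = beta_i rho alpha mu sigma i j" for j i
  define cc where "cc s i = lam * s 0 * exp (- s i)" for s :: "nat \<Rightarrow> real" and i
  define Eq where "Eq j s s' \<longleftrightarrow> (\<forall>i\<in>{1..j}. s i + cc s' i * exp (s i) = (bb j i + lam) * s 0 - 1)
      \<and> (\<Sum>i=1..j. s i / alpha i) = 0" for j s s'
  define Good where "Good j s \<longleftrightarrow> 1/(beta_hi+lam) \<le> s 0 \<and> (\<forall>i\<in>{1..j}. s 0 * exp (- s i) \<le> 1/beta_lo)"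
    for j and s :: "nat \<Rightarrow> real"
  define M where "M = 1/beta_lo + ln ((beta_hi+lam)/beta_lo) + (beta_hi+lam)/beta_lo"
  define Bnd where "Bnd j s \<longleftrightarrow> \<bar>s 0\<bar> \<le> M \<and> (\<forall>i\<in>{1..j}. \<bar>s i\<bar> \<le> M)" for j and s :: "nat \<Rightarrow> real"
  define stepf where "stepf j s' = (SOME s. Eq j s s')" for j s'
  define term0 where "term0 = (\<lambda>i::nat. if i = 0 then 1/beta_lo else 0)"
  have hl: "beta_hi + lam > 0" using beta_lo_pos beta_lo_hi lam by linarith
  have ratio: "(beta_hi+lam)/beta_lo \<ge> 1" using beta_lo_pos beta_lo_hi lam by simp
  have lnpos: "ln ((beta_hi+lam)/beta_lo) \<ge> 0" using ratio by simp
  have Mpos: "M \<ge> 0" unfolding M_def using lnpos ratio beta_lo_pos by simp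
  have bbb: "beta_lo \<le> bb j i \<and> bb j i \<le> beta_hi" if "j \<ge> N0" "i \<in> {1..j}" for i j
    using beta_bounds[of j i] that unfolding bb_def by auto
  have key: "Eq j (stepf j s') s' \<and> Good j (stepf j s') \<and> Bnd j (stepf j s')"
    if j: "j \<ge> N0" and G: "Good (Suc j) s'" for j s'
  proof -
    have j1: "j \<ge> 1" using j N0 by simp
    have s0: "s' 0 > 0" using G hl unfolding Good_def by (smt (verit) divide_pos_pos)
    have cp: "0 < cc s' i \<and> cc s' i \<le> lam / beta_lo" if i: "i \<in> {1..j}" for i
    proof
      show "0 < cc s' i" unfolding cc_def using s0 lam by simp
      have "s' 0 * exp (- s' i) \<le> 1/beta_lo" using G i unfolding Good_def by auto
      then have "lam * (s' 0 * exp (- s' i)) \<le> lam * (1/beta_lo)" using lam by (intro mult_left_mono) auto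
      then show "cc s' i \<le> lam / beta_lo" unfolding cc_def by (simp add: mult.assoc)
    qed
    have ap: "\<And>i. i \<in> {1..j} \<Longrightarrow> alpha i > 0" using alpha_pos by simp
    obtain A y where AY: "\<forall>i\<in>{1..j}. y i + cc s' i * exp (y i) = (bb j i + lam) * A - 1"
      "(\<Sum>i=1..j. y i / alpha i) = 0"
      using step_ex[where j=j and alpha=alpha and bl=beta_lo and b="bb j" and c="cc s'" and lam=lam] j1 ap bbb[OF j] beta_lo_pos lam cp by blast
    have "Eq j (y(0 := A)) s'"
      unfolding Eq_def
    proof
      show "\<forall>i\<in>{1..j}. (y(0 := A)) i + cc s' i * exp ((y(0 := A)) i) = (bb j i + lam) * (y(0 := A)) 0 - 1"
        using AY(1) by auto
      have "(\<Sum>i=1..j. (y(0 := A)) i / alpha i) = (\<Sum>i=1..j. y i / alpha i)"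
        by (rule sum.cong) auto
      then show "(\<Sum>i=1..j. (y(0 := A)) i / alpha i) = 0" using AY(2) by simp
    qed
    then have E: "Eq j (stepf j s') s'" unfolding stepf_def by (rule someI[where P="\<lambda>s. Eq j s s'"])
    define s where "s = stepf j s'"
    have E1: "\<And>i. i \<in> {1..j} \<Longrightarrow> s i + cc s' i * exp (s i) = (bb j i + lam) * s 0 - 1"
      and E2: "(\<Sum>i=1..j. s i / alpha i) = 0" using E unfolding Eq_def s_def by auto
    have apA: "\<forall>i\<in>{1..j}. alpha i > 0" using ap by blast
    have bpA: "\<forall>i\<in>{1..j}. beta_lo \<le> bb j i \<and> bb j i \<le> beta_hi" using bbb[OF j] by blast
    have cpA: "\<forall>i\<in>{1..j}. 0 < cc s' i \<and> cc s' i \<le> lam / beta_lo" using cp by blast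
    have E1A: "\<forall>i\<in>{1..j}. s i + cc s' i * exp (s i) = (bb j i + lam) * s 0 - 1" using E1 by blast
    note sb = step_bounds[where j=j and alpha=alpha and bl=beta_lo and b="bb j" and bh=beta_hi and lam=lam and c="cc s'" and y=s and A="s 0", OF j1 apA bpA beta_lo_pos lam cpA E1A E2]
    have "Good j s" unfolding Good_def using sb(1,3) by auto
    moreover have "Bnd j s" unfolding Bnd_def
    proof
      have p: "1/(beta_hi+lam) > 0" using hl by simp
      have q: "1/beta_lo > 0" using beta_lo_pos by simp
      show "\<bar>s 0\<bar> \<le> M" unfolding abs_le_iff M_def using sb(1,2) p lnpos ratio by linarith
      show "\<forall>i\<in>{1..j}. \<bar>s i\<bar> \<le> M"
      proof
        fix i assume i: "i \<in> {1..j}"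
        show "\<bar>s i\<bar> \<le> M" unfolding abs_le_iff M_def using sb(4,5)[OF i] q lnpos ratio by linarith
      qed
    qed
    ultimately show ?thesis using E unfolding s_def by blast
  qed
  have term0: "Good T term0 \<and> Bnd T term0" for T
  proof
    show "Good T term0" unfolding Good_def term0_def
      using beta_lo_pos beta_lo_hi lam by (auto simp: frac_le)
    show "Bnd T term0" unfolding Bnd_def term0_def M_def
      using beta_lo_pos lnpos ratio by auto
  qed
  define sol where "sol T j = backrec stepf term0 T (T - j)" for T j
  have inv: "n \<le> T - N0 \<longrightarrow> Good (T - n) (backrec stepf term0 T n) \<and> Bnd (T - n) (backrec stepf term0 T n)" for T n
  proof (induction n)
    case 0 then show ?case using term0 by simp
  next
    case (Suc n)
    show ?case
    proof
      assume n: "Suc n \<le> T - N0"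
      then have eq: "T - n = Suc (T - Suc n)" and ge: "T - Suc n \<ge> N0" by auto
      have "Good (Suc (T - Suc n)) (backrec stepf term0 T n)" using Suc n eq by simp
      from key[OF ge this] show "Good (T - Suc n) (backrec stepf term0 T (Suc n)) \<and> Bnd (T - Suc n) (backrec stepf term0 T (Suc n))"
        by simp
    qed
  qed
  have solGB: "Good j (sol T j) \<and> Bnd j (sol T j)" if "N0 \<le> j" "j \<le> T" for T j
    using inv[of "T - j" T] that unfolding sol_def by simp
  have solE: "Eq j (sol T j) (sol T (Suc j))" if "N0 \<le> j" "j < T" for T j
  proof -
    have eq: "T - j = Suc (T - Suc j)" and eq2: "T - Suc (T - Suc j) = j" using that by auto
    have "sol T j = stepf j (sol T (Suc j))" unfolding sol_def eq by (simp add: eq2)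
    moreover have "Good (Suc j) (sol T (Suc j))" using solGB[of "Suc j" T] that by simp
    ultimately show ?thesis using key[of j] that by simp
  qed
  define V where "V T j i = (if N0 \<le> j \<and> j \<le> T \<and> i \<le> j then sol T j i else 0)" for T j i
  define K where "K = PiE UNIV (\<lambda>_::nat. PiE UNIV (\<lambda>_::nat. {-M..(M::real)}))"
  have VK: "V T \<in> K" for T
  proof -
    have "V T j i \<in> {-M..M}" for j i
    proof (cases "N0 \<le> j \<and> j \<le> T \<and> i \<le> j")
      case True
      then have B: "Bnd j (sol T j)" using solGB by blast
      show ?thesis
      proof (cases "i = 0")
        case True then show ?thesis using B \<open>N0 \<le> j \<and> j \<le> T \<and> i \<le> j\<close> unfolding V_def Bnd_def by auto
      next
        case False then have "i \<in> {1..j}" using \<open>N0 \<le> j \<and> j \<le> T \<and> i \<le> j\<close> by auto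
        then have "\<bar>sol T j i\<bar> \<le> M" using B unfolding Bnd_def by blast
        then show ?thesis using \<open>N0 \<le> j \<and> j \<le> T \<and> i \<le> j\<close> unfolding V_def by (auto simp: abs_le_iff)
      qed
    next
      case False then show ?thesis using Mpos unfolding V_def by auto
    qed
    then show ?thesis unfolding K_def by auto
  qed
  have "seq_compact K" unfolding K_def by (rule compact_imp_seq_compact[OF compact_box])
  then obtain W r where WK: "W \<in> K" and r: "strict_mono r" and lim: "(V \<circ> r) \<longlonglongrightarrow> W"
    using VK by (metis seq_compactE)
  have co: "(\<lambda>n. V (r n) j i) \<longlonglongrightarrow> W j i" for j i
    using coord_tendsto[of "V \<circ> r" W j i] lim by (simp add: o_def)
  have evj: "eventually (\<lambda>n. j < r n) sequentially" for j
  proof -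
    have *: "j < r n" if "Suc j \<le> n" for n using seq_suble[OF r, of n] that by linarith
    show ?thesis by (rule eventually_mono[OF eventually_ge_at_top[of "Suc j"] *])
  qed
  have Vsol: "V T j i = sol T j i" if "N0 \<le> j" "j \<le> T" "i \<le> j" for T j i
    using that unfolding V_def by simp
  have WE: "Eq j (W j) (W (Suc j))" if j: "N0 \<le> j" for j
  proof -
    have ev1: "\<forall>\<^sub>F n in sequentially. V (r n) j i + cc (V (r n) (Suc j)) i * exp (V (r n) j i)
         - ((bb j i + lam) * V (r n) j 0 - 1) = 0" if i: "i \<in> {1..j}" for i
      using evj[of j]
    proof eventually_elim
      case (elim n)
      have "Eq j (sol (r n) j) (sol (r n) (Suc j))" using solE j elim by blast
      then have "sol (r n) j i + cc (sol (r n) (Suc j)) i * exp (sol (r n) j i) = (bb j i + lam) * sol (r n) j 0 - 1"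
        using i unfolding Eq_def by blast
      then show ?case unfolding cc_def using Vsol[of j "r n"] Vsol[of "Suc j" "r n"] j elim i by simp
    qed
    have ev2: "\<forall>\<^sub>F n in sequentially. (\<Sum>i=1..j. V (r n) j i / alpha i) = 0"
      using evj[of j]
    proof eventually_elim
      case (elim n)
      have "Eq j (sol (r n) j) (sol (r n) (Suc j))" using solE j elim by blast
      then have "(\<Sum>i=1..j. sol (r n) j i / alpha i) = 0" unfolding Eq_def by blast
      moreover have "(\<Sum>i=1..j. V (r n) j i / alpha i) = (\<Sum>i=1..j. sol (r n) j i / alpha i)"
        using Vsol[of j "r n"] j elim by (intro sum.cong) auto
      ultimately show ?case by simp
    qed
    show ?thesis unfolding Eq_def
    proof
      show "\<forall>i\<in>{1..j}. W j i + cc (W (Suc j)) i * exp (W j i) = (bb j i + lam) * W j 0 - 1"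
      proof
        fix i assume i: "i \<in> {1..j}"
        have "(\<lambda>n. V (r n) j i + cc (V (r n) (Suc j)) i * exp (V (r n) j i)
         - ((bb j i + lam) * V (r n) j 0 - 1)) \<longlonglongrightarrow> W j i + cc (W (Suc j)) i * exp (W j i)
         - ((bb j i + lam) * W j 0 - 1)" unfolding cc_def by (intro tendsto_intros co)
        from lim_eq0[OF this ev1[OF i]] show "W j i + cc (W (Suc j)) i * exp (W j i) = (bb j i + lam) * W j 0 - 1"
          by simp
      qed
      have "(\<lambda>n. (\<Sum>i=1..j. V (r n) j i / alpha i)) \<longlonglongrightarrow> (\<Sum>i=1..j. W j i / alpha i)"
        by (intro tendsto_intros co) (use alpha_pos in fastforce)
      from lim_eq0[OF this ev2] show "(\<Sum>i=1..j. W j i / alpha i) = 0" .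
    qed
  qed
  have WG: "Good j (W j)" if j: "N0 \<le> j" for j
  proof -
    have "1/(beta_hi+lam) \<le> W j 0"
    proof (rule lim_ge[OF co])
      show "\<forall>\<^sub>F n in sequentially. 1/(beta_hi+lam) \<le> V (r n) j 0"
        using evj[of j]
      proof eventually_elim
        case (elim n)
        have "Good j (sol (r n) j)" using solGB j elim by simp
        then show ?case using Vsol[of j "r n" 0] j elim unfolding Good_def by simp
      qed
    qed
    moreover have "W j 0 * exp (- W j i) \<le> 1/beta_lo" if i: "i \<in> {1..j}" for i
    proof (rule lim_le)
      show "(\<lambda>n. V (r n) j 0 * exp (- V (r n) j i)) \<longlonglongrightarrow> W j 0 * exp (- W j i)"
        by (intro tendsto_intros co)
      show "\<forall>\<^sub>F n in sequentially. V (r n) j 0 * exp (- V (r n) j i) \<le> 1/beta_lo"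
        using evj[of j]
      proof eventually_elim
        case (elim n)
        have "Good j (sol (r n) j)" using solGB j elim by simp
        then show ?case using i Vsol[of j "r n"] j elim unfolding Good_def by auto
      qed
    qed
    ultimately show ?thesis unfolding Good_def by blast
  qed
  define A where "A j = W j 0" for j
  define k where "k i j = W j i / alpha i" for i j
  show ?thesis
  proof (intro exI[of _ A] exI[of _ k] allI impI)
    fix j i assume j: "N0 \<le> j" and i: "1 \<le> i \<and> i \<le> j"
    have j1: "j \<ge> 1" using j N0 by simp
    have ap: "\<And>i. i \<in> {1..j} \<Longrightarrow> alpha i > 0" using alpha_pos by simp
    have E: "Eq j (W j) (W (Suc j))" using WE j by simp
    have G: "Good (Suc j) (W (Suc j))" using WG j by simp
    have s0: "W (Suc j) 0 > 0" using G hl unfolding Good_def by (smt (verit) divide_pos_pos)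
    have cp: "0 < cc (W (Suc j)) i \<and> cc (W (Suc j)) i \<le> lam / beta_lo" if i: "i \<in> {1..j}" for i
    proof
      show "0 < cc (W (Suc j)) i" unfolding cc_def using s0 lam by simp
      have "W (Suc j) 0 * exp (- W (Suc j) i) \<le> 1/beta_lo" using G i unfolding Good_def by auto
      then have "lam * (W (Suc j) 0 * exp (- W (Suc j) i)) \<le> lam * (1/beta_lo)" using lam by (intro mult_left_mono) auto
      then show "cc (W (Suc j)) i \<le> lam / beta_lo" unfolding cc_def by (simp add: mult.assoc)
    qed
    have E1: "\<And>i. i \<in> {1..j} \<Longrightarrow> W j i + cc (W (Suc j)) i * exp (W j i) = (bb j i + lam) * W j 0 - 1"
      and E2: "(\<Sum>i=1..j. W j i / alpha i) = 0" using E unfolding Eq_def by auto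
    have apA: "\<forall>i\<in>{1..j}. alpha i > 0" using ap by blast
    have bpA: "\<forall>i\<in>{1..j}. beta_lo \<le> bb j i \<and> bb j i \<le> beta_hi" using bbb[OF j] by blast
    have cpA: "\<forall>i\<in>{1..j}. 0 < cc (W (Suc j)) i \<and> cc (W (Suc j)) i \<le> lam / beta_lo" using cp by blast
    have E1A: "\<forall>i\<in>{1..j}. W j i + cc (W (Suc j)) i * exp (W j i) = (bb j i + lam) * W j 0 - 1" using E1 by blast
    note sb = step_bounds[where j=j and alpha=alpha and bl=beta_lo and b="bb j" and bh=beta_hi and lam=lam and c="cc (W (Suc j))" and y="W j" and A="W j 0", OF j1 apA bpA beta_lo_pos lam cpA E1A E2]
    have ex: "lam * A (j+1) * exp (- alpha l * (k l (j+1) - k l j)) = (bb j l + lam) * A j - 1 - W j l"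
      if l: "l \<in> {1..j}" for l
    proof -
      have "alpha l \<noteq> 0" using ap[OF l] by simp
      then have "- alpha l * (k l (j+1) - k l j) = W j l + (- W (Suc j) l)"
        unfolding k_def by (simp add: field_simps)
      then have "exp (- alpha l * (k l (j+1) - k l j)) = exp (W j l + (- W (Suc j) l))"
        by (simp only:)
      also have "... = exp (- W (Suc j) l) * exp (W j l)" by (simp only: exp_add mult.commute)
      finally have "exp (- alpha l * (k l (j+1) - k l j)) = exp (- W (Suc j) l) * exp (W j l)" .
      then show ?thesis using E1[OF l] unfolding A_def cc_def by (simp add: algebra_simps)
    qed
    have iI: "i \<in> {1..j}" using i by simp
    have Apos: "A j \<noteq> 0" using sb(1) hl unfolding A_def by (smt (verit) divide_pos_pos)
    have eq1: "1 / A j = beta_Sigma rho alpha mu sigma j + lam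
          - (alpha_Sigma alpha j * (\<Sum>l=1..j. lam * A (j+1) * exp (- alpha l * (k l (j+1) - k l j)) / alpha l))
            * (1 / A j)"
      unfolding beta_Sigma_def alpha_Sigma_def
      by (rule eq1_alg[where j=j and alpha=alpha and A="A j" and e="\<lambda>l. lam * A (j+1) * exp (- alpha l * (k l (j+1) - k l j))" and b="\<lambda>i. beta_i rho alpha mu sigma i j" and lam=lam and y="W j"])
         (use j1 ap Apos ex[unfolded bb_def] E2 in auto)
    have eq2: "k i j = ((beta_i rho alpha mu sigma i j + lam) * A j - 1) / alpha i
          - lam * A (j+1) * exp (- alpha i * (k i (j+1) - k i j)) / alpha i"
    proof -
      have "alpha i \<noteq> 0" using ap[OF iI] by simp
      then show ?thesis unfolding ex[OF iI] unfolding k_def bb_def by (simp add: field_simps)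
    qed
    have ak: "alpha i * k i j = W j i" using ap[OF iI] unfolding k_def by simp
    have ak2: "- alpha i * k i j = - W j i" using ak by simp
    show "1 / A j = beta_Sigma rho alpha mu sigma j + lam
          - (alpha_Sigma alpha j * (\<Sum>l=1..j. lam * A (j+1) * exp (- alpha l * (k l (j+1) - k l j)) / alpha l))
            * (1 / A j)
     \<and> k i j = ((beta_i rho alpha mu sigma i j + lam) * A j - 1) / alpha i
          - lam * A (j+1) * exp (- alpha i * (k i (j+1) - k i j)) / alpha i
     \<and> 1 / (beta_hi + lam) < A j \<and> A j \<le> 1 / beta_lo
     \<and> A j * exp (- alpha i * k i j) \<le> 1 / beta_lo
     \<and> - ln ((beta_hi + lam) / beta_lo) \<le> alpha i * k i j
     \<and> alpha i * k i j \<le> (beta_hi + lam) / beta_lo - 1"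
    proof -
      have f1: "1 / (beta_hi + lam) < A j" "A j \<le> 1 / beta_lo" using sb(1,2) unfolding A_def .
      have f2: "A j * exp (- W j i) \<le> 1 / beta_lo" using sb(3)[OF iI] unfolding A_def .
      have f3: "- ln ((beta_hi + lam) / beta_lo) \<le> W j i" "W j i \<le> (beta_hi + lam) / beta_lo - 1"
        using sb(4,5)[OF iI] .
      show ?thesis unfolding ak ak2 using eq1 eq2 f1 f2 f3 by (intro conjI) assumption+
    qed
  qed
qed

end
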